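(* Let $p\in\mathbb{T}^{\mathcal{P}([n])}$ be a tropical Wick vector. Then every circuit of $p$ is tropically orthogonal to every cocircuit of $p$.
   Context: $\mathbb{T}=\mathbb{R}\cup\{\infty\}$; $\mathcal{P}([n])$ the set of subsets of $[n]$. A tropical Wick vector is $p\in\mathbb{T}^{\mathcal{P}([n])}$ such that for all $S,T\subseteq[n]$ the minimum $\min_{i\in S\Delta T}(p_{S\Delta\{i\}}+p_{T\Delta\{i\}})$ is attained at least twice or equals $\infty$. Let $\mathcal{J}=\{1,\dots,n,1^*,\dots,n^*\}$ with involution $i\leftrightarrow i^*$. For $S\subseteq[n]$ its extension is the set $\bar S=S\cup\{i^*: i\in[n]\setminus S\}\subseteq\mathcal{J}$, and $\bar p_{\bar S}:=p_S$. For $T\subseteq[n]$ define $c_T\in\mathbb{T}^{\mathcal{J}}$ by $(c_T)_i=\bar p_{\bar T\Delta\{i,i^*\}}$ if $i\in\bar T$ and $\infty$ otherwise, and $c^*_T\in\mathbb{T}^{\mathcal{J}}$ by $(c^*_T)_i=\bar p_{\bar T\Delta\{i,i^*\}}$ if $i\notin\bar T$ and $\infty$ otherwise. A circuit of $p$ is a vector $c_T+\lambda\mathbf{1}$ ($T\subseteq[n]$, $\lambda\in\mathbb{R}$) with nonempty support (support = set of coordinates $\neq\infty$); a cocircuit of $p$ is a vector $c^*_T+\lambda\mathbf{1}$ with nonempty support. Two vectors $x,y\in\mathbb{T}^N$ are tropically orthogonal if $\min_k(x_k+y_k)$ is attained at least twice or equals $\infty$. *)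

theory Defs
  imports "HOL-Library.Extended_Real"
begin

text \<open>Tropical numbers T = R \<union> {\<infinity>} are modelled as extended reals different from -\<infinity>.
  The ground set [n] is {1..n}.  The set J = {1..n,1*..n*} is modelled with a datatype.\<close>

datatype elem = Pl nat | St nat

fun dual :: "elem \<Rightarrow> elem" where
  "dual (Pl i) = St i" | "dual (St i) = Pl i"

fun base :: "elem \<Rightarrow> nat" where
  "base (Pl i) = i" | "base (St i) = i"

definition tropical :: "ereal \<Rightarrow> bool" where
  "tropical x \<longleftrightarrow> x \<noteq> -\<infinity>"

definition Jset :: "nat \<Rightarrow> elem set" where
  "Jset n = Pl ` {1..n} \<union> St ` {1..n}"

text \<open>The minimum of f over I is attained at least twice or equals \<infinity>
  (the minimum over an empty index set is \<infinity>).\<close>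
definition min_twice_or_inf :: "'a set \<Rightarrow> ('a \<Rightarrow> ereal) \<Rightarrow> bool" where
  "min_twice_or_inf I f \<longleftrightarrow>
     (\<forall>i\<in>I. f i = \<infinity>) \<or>
     (\<exists>i\<in>I. \<exists>j\<in>I. i \<noteq> j \<and> f i = f j \<and> (\<forall>k\<in>I. f i \<le> f k))"

definition tropical_wick :: "nat \<Rightarrow> (nat set \<Rightarrow> ereal) \<Rightarrow> bool" where
  "tropical_wick n p \<longleftrightarrow>
     (\<forall>S. S \<subseteq> {1..n} \<longrightarrow> tropical (p S)) \<and>
     (\<forall>S T. S \<subseteq> {1..n} \<longrightarrow> T \<subseteq> {1..n} \<longrightarrow>
        min_twice_or_inf (S - T \<union> (T - S)) (\<lambda>i. p (S - {i} \<union> ({i} - S)) + p (T - {i} \<union> ({i} - T))))"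

definition ext :: "nat \<Rightarrow> nat set \<Rightarrow> elem set" where
  "ext n S = Pl ` S \<union> St ` ({1..n} - S)"

text \<open>pbar on extensions: pbar (ext S) = p S (every extension is recovered from its Pl-part).\<close>
definition pbar :: "(nat set \<Rightarrow> ereal) \<Rightarrow> elem set \<Rightarrow> ereal" where
  "pbar p X = p {i. Pl i \<in> X}"

definition symdiff :: "'a set \<Rightarrow> 'a set \<Rightarrow> 'a set" where
  "symdiff A B = (A - B) \<union> (B - A)"

definition circ_vec :: "nat \<Rightarrow> (nat set \<Rightarrow> ereal) \<Rightarrow> nat set \<Rightarrow> elem \<Rightarrow> ereal" where
  "circ_vec n p T i = (if i \<in> ext n T then pbar p (symdiff (ext n T) {i, dual i}) else \<infinity>)"

definition cocirc_vec :: "nat \<Rightarrow> (nat set \<Rightarrow> ereal) \<Rightarrow> nat set \<Rightarrow> elem \<Rightarrow> ereal" where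
  "cocirc_vec n p T i = (if i \<notin> ext n T then pbar p (symdiff (ext n T) {i, dual i}) else \<infinity>)"

text \<open>Vectors in T^J are functions elem \<Rightarrow> ereal considered on Jset n.\<close>
definition is_circuit :: "nat \<Rightarrow> (nat set \<Rightarrow> ereal) \<Rightarrow> (elem \<Rightarrow> ereal) \<Rightarrow> bool" where
  "is_circuit n p x \<longleftrightarrow>
     (\<exists>T lam. T \<subseteq> {1..n} \<and> (\<forall>j\<in>Jset n. x j = circ_vec n p T j + ereal lam)) \<and>
     (\<exists>j\<in>Jset n. x j \<noteq> \<infinity>)"

definition is_cocircuit :: "nat \<Rightarrow> (nat set \<Rightarrow> ereal) \<Rightarrow> (elem \<Rightarrow> ereal) \<Rightarrow> bool" where
  "is_cocircuit n p x \<longleftrightarrow>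
     (\<exists>T lam. T \<subseteq> {1..n} \<and> (\<forall>j\<in>Jset n. x j = cocirc_vec n p T j + ereal lam)) \<and>
     (\<exists>j\<in>Jset n. x j \<noteq> \<infinity>)"

definition trop_orthogonal :: "'a set \<Rightarrow> ('a \<Rightarrow> ereal) \<Rightarrow> ('a \<Rightarrow> ereal) \<Rightarrow> bool" where
  "trop_orthogonal N x y \<longleftrightarrow> min_twice_or_inf N (\<lambda>k. x k + y k)"

end

theory Submission
  imports Defs
begin

lemma pl_part_circ_Pl:
  assumes "T \<subseteq> {1..n}" "a \<in> {1..n}"
  shows "{i. Pl i \<in> symdiff (ext n T) {Pl a, St a}} = (if a \<in> T then T - {a} else insert a T)"
  using assms by (auto simp: symdiff_def ext_def)

lemma pl_part_circ_St:
  assumes "T \<subseteq> {1..n}" "a \<in> {1..n}"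
  shows "{i. Pl i \<in> symdiff (ext n T) {St a, Pl a}} = (if a \<in> T then T - {a} else insert a T)"
  using assms by (auto simp: symdiff_def ext_def)

lemma circ_Pl: "T \<subseteq> {1..n} \<Longrightarrow> a \<in> {1..n} \<Longrightarrow>
  circ_vec n p T (Pl a) = (if a \<in> T then p (T - {a}) else \<infinity>)"
  unfolding circ_vec_def pbar_def using pl_part_circ_Pl[of T n a]
  by (auto simp: ext_def)

lemma circ_St: "T \<subseteq> {1..n} \<Longrightarrow> a \<in> {1..n} \<Longrightarrow>
  circ_vec n p T (St a) = (if a \<in> T then \<infinity> else p (insert a T))"
  unfolding circ_vec_def pbar_def using pl_part_circ_St[of T n a]
  by (auto simp: ext_def)

lemma cocirc_Pl: "T \<subseteq> {1..n} \<Longrightarrow> a \<in> {1..n} \<Longrightarrow>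
  cocirc_vec n p T (Pl a) = (if a \<in> T then \<infinity> else p (insert a T))"
  unfolding cocirc_vec_def pbar_def using pl_part_circ_Pl[of T n a]
  by (auto simp: ext_def)

lemma cocirc_St: "T \<subseteq> {1..n} \<Longrightarrow> a \<in> {1..n} \<Longrightarrow>
  cocirc_vec n p T (St a) = (if a \<in> T then p (T - {a}) else \<infinity>)"
  unfolding cocirc_vec_def pbar_def using pl_part_circ_St[of T n a]
  by (auto simp: ext_def)

lemma ereal_add_ac2: "ereal a + (ereal b + z) = ereal (a + b) + (z::ereal)"
  by (metis add.assoc plus_ereal.simps(1))

theorem proposition6p4:
  fixes n :: nat and p :: "nat set \<Rightarrow> ereal" and x y :: "elem \<Rightarrow> ereal"
  assumes "tropical_wick n p"
    and "is_circuit n p x"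
    and "is_cocircuit n p y"
  shows "trop_orthogonal (Jset n) x y"
proof -
  obtain T lam where T: "T \<subseteq> {1..n}" and xd: "\<And>j. j \<in> Jset n \<Longrightarrow> x j = circ_vec n p T j + ereal lam"
    using assms(2) unfolding is_circuit_def by blast
  obtain U mu where U: "U \<subseteq> {1..n}" and yd: "\<And>j. j \<in> Jset n \<Longrightarrow> y j = cocirc_vec n p U j + ereal mu"
    using assms(3) unfolding is_cocircuit_def by blast
  define D where "D = T - U \<union> (U - T)"
  define w where "w = (\<lambda>i. p (T - {i} \<union> ({i} - T)) + p (U - {i} \<union> ({i} - U)))"
  define c where "c = ereal lam + ereal mu"
  define F where "F = (\<lambda>k. x k + y k)"
  have D: "D \<subseteq> {1..n}" using T U by (auto simp: D_def)
  have wick: "min_twice_or_inf D w"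
    using assms(1) T U unfolding tropical_wick_def D_def w_def by blast
  have trop: "\<And>S. S \<subseteq> {1..n} \<Longrightarrow> p S \<noteq> -\<infinity>"
    using assms(1) unfolding tropical_wick_def tropical_def by blast
  have FPl: "F (Pl a) = (if a \<in> T - U then w a + c else \<infinity>)" if a: "a \<in> {1..n}" for a
  proof -
    have j: "Pl a \<in> Jset n" using a by (simp add: Jset_def)
    have e1: "T - {a} \<union> ({a} - T) = T - {a}" if "a \<in> T" using that by auto
    have e2: "U - {a} \<union> ({a} - U) = insert a U" if "a \<notin> U" using that by auto
    show ?thesis
      using T U a trop[of "T - {a}"] trop[of "insert a U"]
      by (auto simp: F_def xd[OF j] yd[OF j] circ_Pl cocirc_Pl w_def c_def e1 e2 ac_simps ereal_add_ac2)
  qed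
  have FSt: "F (St a) = (if a \<in> U - T then w a + c else \<infinity>)" if a: "a \<in> {1..n}" for a
  proof -
    have j: "St a \<in> Jset n" using a by (simp add: Jset_def)
    have e1: "U - {a} \<union> ({a} - U) = U - {a}" if "a \<in> U" using that by auto
    have e2: "T - {a} \<union> ({a} - T) = insert a T" if "a \<notin> T" using that by auto
    show ?thesis
      using T U a trop[of "U - {a}"] trop[of "insert a T"]
      by (auto simp: F_def xd[OF j] yd[OF j] circ_St cocirc_St w_def c_def e1 e2 ac_simps ereal_add_ac2)
  qed
  define g where "g = (\<lambda>a. if a \<in> T then Pl a else St a)"
  have gJ: "a \<in> D \<Longrightarrow> g a \<in> Jset n" for a using D by (auto simp: g_def Jset_def)
  have Fg: "a \<in> D \<Longrightarrow> F (g a) = w a + c" for a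
    using D FPl FSt by (auto simp: g_def D_def)
  have ginj: "a \<in> D \<Longrightarrow> b \<in> D \<Longrightarrow> a \<noteq> b \<Longrightarrow> g a \<noteq> g b" for a b
    by (auto simp: g_def)
  have Fother: "F k = \<infinity>" if "k \<in> Jset n" "k \<notin> g ` D" for k
  proof -
    obtain a where a: "a \<in> {1..n}" "k = Pl a \<or> k = St a" using \<open>k \<in> Jset n\<close> unfolding Jset_def by blast
    show ?thesis using a that(2) FPl[OF a(1)] FSt[OF a(1)]
      by (auto simp: g_def D_def image_def split: if_splits)
  qed
  have cfin: "c \<noteq> -\<infinity>" by (simp add: c_def)
  show ?thesis
    unfolding trop_orthogonal_def min_twice_or_inf_def F_def[symmetric]
  proof (cases "\<forall>i\<in>D. w i = \<infinity>")
    case True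
    have "\<forall>k\<in>Jset n. F k = \<infinity>"
    proof
      fix k assume k: "k \<in> Jset n"
      show "F k = \<infinity>"
      proof (cases "k \<in> g ` D")
        case True
        then obtain a where "a \<in> D" "k = g a" by blast
        then show ?thesis using Fg \<open>\<forall>i\<in>D. w i = \<infinity>\<close> cfin by simp
      qed (use Fother k in auto)
    qed
    then show "(\<forall>i\<in>Jset n. F i = \<infinity>) \<or> (\<exists>i\<in>Jset n. \<exists>j\<in>Jset n. i \<noteq> j \<and> F i = F j \<and> (\<forall>k\<in>Jset n. F i \<le> F k))" by blast
  next
    case False
    then obtain a b where ab: "a \<in> D" "b \<in> D" "a \<noteq> b" "w a = w b" "\<forall>k\<in>D. w a \<le> w k"
      using wick unfolding min_twice_or_inf_def by blast
    have "\<forall>k\<in>Jset n. F (g a) \<le> F k"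
    proof
      fix k assume k: "k \<in> Jset n"
      show "F (g a) \<le> F k"
      proof (cases "k \<in> g ` D")
        case True
        then obtain d where "d \<in> D" "k = g d" by blast
        then show ?thesis using Fg ab by (simp add: add_right_mono)
      qed (use Fother k in auto)
    qed
    moreover have "F (g a) = F (g b)" using Fg ab by simp
    ultimately show "(\<forall>i\<in>Jset n. F i = \<infinity>) \<or> (\<exists>i\<in>Jset n. \<exists>j\<in>Jset n. i \<noteq> j \<and> F i = F j \<and> (\<forall>k\<in>Jset n. F i \<le> F k))"
      using gJ ab ginj by blast
  qed
qed

end
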